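(* For $k\in\mathbb{N}^{d+1}$, $(\mathfrak t,p)\in\mathcal E$, $\mathfrak l\in\mathfrak L$ and any $\hat F\in\mathcal{D}_{\mathfrak l}\otimes\mathscr P$ one has $$\sum_{\ell\in\mathbb N^{d+1}}\binom{k}{\ell}\partial^{k-\ell}D_{(\mathfrak t,p-\ell)}\hat F=D_{(\mathfrak t,p)}\,\partial^k\hat F,$$ with the convention that $\partial^q=D_{(\mathfrak t,q)}=0$ unless $q_i\ge0$ for all $i$.
   Context: Fix $d\ge1$, a finite set $\mathfrak L$ of labels, and $\mathcal E=\mathfrak L\times\mathbb{N}^{d+1}$. Let $(\mathfrak X_o)_{o\in\mathcal E}$ be commuting indeterminates and $\mathscr P$ the real algebra of smooth functions of finitely many of them. For $o\in\mathcal E$, $D_o:\mathscr P\to\mathscr P$ is differentiation with respect to $\mathfrak X_o$; for $i\in\{0,\dots,d\}$, with $e_i$ the canonical basis vectors, set $\partial_i\mathfrak X_{(\mathfrak t,p)}=\mathfrak X_{(\mathfrak t,p+e_i)}$ and $\partial_iF=\sum_o\partial_i\mathfrak X_o\,D_oF$. For each $\mathfrak l\in\mathfrak L$ a finite subset $\mathcal E_+(\mathfrak l)\subset\mathcal E$ is given, and for a fixed integer $k_\star$, $\mathcal D_{\mathfrak l}$ is the commutative unital algebra generated by $\{\mathfrak d_o\}_{o\in\mathcal E_+(\mathfrak l)}$ quotiented by the ideal generated by monomials $\mathfrak d^\alpha$ with $\max_o\alpha_o>k_\star$. On $\mathcal D_{\mathfrak l}$ set $D_o\mathfrak d=\mathfrak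 d_o\cdot\mathfrak d$ if $o\in\mathcal E_+(\mathfrak l)$ and $0$ otherwise; extend to $\mathcal D_{\mathfrak l}\otimes\mathscr P$ by $D_o(\mathfrak d\otimes F)=\mathfrak d\otimes D_oF+D_o\mathfrak d\otimes F$ and set $\partial_i(\mathfrak d\otimes F)=\mathfrak d\otimes\partial_iF+\sum_{o}D_o\mathfrak d\otimes F\,\partial_i\mathfrak X_o$. $\partial^k=\prod_i\partial_i^{k_i}$, and $\binom{k}{\ell}=\prod_i\binom{k_i}{\ell_i}$ (zero unless $\ell\le k$ componentwise). *)

theory Defs
  imports "HOL-Analysis.Analysis"
begin

text \<open>Multi-indices in N^(d+1) are functions 'i => nat on a finite index type 'i with
  CARD('i) = d+1.  Labels form a finite type 'l.  The index set E = L x N^(d+1).\<close>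

type_synonym ('l, 'i) idx = "'l \<times> ('i \<Rightarrow> nat)"
type_synonym ('l, 'i) val = "('l, 'i) idx \<Rightarrow> real"   \<comment> \<open>valuations of the indeterminates\<close>
type_synonym ('l, 'i) fn = "('l, 'i) val \<Rightarrow> real"    \<comment> \<open>elements of P\<close>
type_synonym ('l, 'i) dfn = "(('l, 'i) idx \<Rightarrow> nat) \<Rightarrow> ('l, 'i) fn"
  \<comment> \<open>elements of D_l (x) P: coefficient of the monomial d^alpha\<close>

definition pd :: "('l, 'i) idx \<Rightarrow> ('l, 'i) fn \<Rightarrow> ('l, 'i) fn" where
  "pd e F = (\<lambda>x. deriv (\<lambda>s. F (x(e := s))) (x e))"

fun iter_pd :: "('l, 'i) idx list \<Rightarrow> ('l, 'i) fn \<Rightarrow> ('l, 'i) fn" where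
  "iter_pd [] F = F"
| "iter_pd (e # es) F = pd e (iter_pd es F)"

definition depends_only :: "('l, 'i) idx set \<Rightarrow> ('l, 'i) fn \<Rightarrow> bool" where
  "depends_only S F \<longleftrightarrow> (\<forall>x y. (\<forall>e\<in>S. x e = y e) \<longrightarrow> F x = F y)"

definition smooth_fn :: "('l, 'i) fn \<Rightarrow> bool" where
  "smooth_fn F \<longleftrightarrow> (\<exists>S. finite S \<and> depends_only S F \<and>
     (\<forall>es. continuous_on UNIV (iter_pd es F) \<and>
           (\<forall>e x. (\<lambda>s. iter_pd es F (x(e := s))) differentiable (at (x e)))))"

text \<open>shift: partial_i X_(t,p) = X_(t,p+e_i)\<close>
definition shift :: "'i \<Rightarrow> ('l, 'i) idx \<Rightarrow> ('l, 'i) idx" where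
  "shift i e = (fst e, (snd e)(i := snd e i + 1))"

text \<open>partial_i F = sum_o partial_i X_o * D_o F  (finite sum over the e with D_o F nonzero)\<close>
definition pdx :: "'i \<Rightarrow> ('l, 'i) fn \<Rightarrow> ('l, 'i) fn" where
  "pdx i F = (\<lambda>x. \<Sum>e\<in>{e. pd e F \<noteq> (\<lambda>_. 0)}. x (shift i e) * pd e F x)"

text \<open>exponents alpha of nonzero monomials d^alpha in D_l (E = E_+(l), kstar = k_star)\<close>
definition validD :: "('l, 'i) idx set \<Rightarrow> nat \<Rightarrow> (('l, 'i) idx \<Rightarrow> nat) \<Rightarrow> bool" where
  "validD E kstar \<alpha> \<longleftrightarrow> (\<forall>e. e \<notin> E \<longrightarrow> \<alpha> e = 0) \<and> (\<forall>e. \<alpha> e \<le> kstar)"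

definition DP :: "('l, 'i) idx set \<Rightarrow> nat \<Rightarrow> ('l, 'i) dfn set" where
  "DP E kstar = {Fh. \<forall>\<alpha>. (validD E kstar \<alpha> \<longrightarrow> smooth_fn (Fh \<alpha>)) \<and>
                          (\<not> validD E kstar \<alpha> \<longrightarrow> Fh \<alpha> = (\<lambda>_. 0))}"

text \<open>D_o on D_l (x) P: D_o(d (x) F) = d (x) D_o F + d_o d (x) F\<close>
definition Dhat :: "('l, 'i) idx set \<Rightarrow> nat \<Rightarrow> ('l, 'i) idx \<Rightarrow> ('l, 'i) dfn \<Rightarrow> ('l, 'i) dfn" where
  "Dhat E kstar e Fh = (\<lambda>\<alpha>. if validD E kstar \<alpha> then
      (\<lambda>x. pd e (Fh \<alpha>) x +
            (if e \<in> E \<and> 1 \<le> \<alpha> e then Fh (\<alpha>(e := \<alpha> e - 1)) x else 0))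
    else (\<lambda>_. 0))"

text \<open>partial_i on D_l (x) P:
  partial_i(d (x) F) = d (x) partial_i F + sum_o D_o d (x) F partial_i X_o\<close>
definition dhat :: "('l, 'i) idx set \<Rightarrow> nat \<Rightarrow> 'i \<Rightarrow> ('l, 'i) dfn \<Rightarrow> ('l, 'i) dfn" where
  "dhat E kstar i Fh = (\<lambda>\<alpha>. if validD E kstar \<alpha> then
      (\<lambda>x. pdx i (Fh \<alpha>) x +
            (\<Sum>e\<in>E. if 1 \<le> \<alpha> e then Fh (\<alpha>(e := \<alpha> e - 1)) x * x (shift i e) else 0))
    else (\<lambda>_. 0))"

definition dpow :: "('l, 'i::{finite,linorder}) idx set \<Rightarrow> nat \<Rightarrow> ('i \<Rightarrow> nat)
                    \<Rightarrow> ('l, 'i) dfn \<Rightarrow> ('l, 'i) dfn" where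
  "dpow E kstar k Fh = fold (\<lambda>i G. (dhat E kstar i ^^ k i) G) (sorted_list_of_set UNIV) Fh"

end

theory Submission
  imports Defs
begin

definition pdiff :: "('l, 'i) fn \<Rightarrow> bool" where
  "pdiff F \<longleftrightarrow> (\<forall>e x. (\<lambda>s. F (x(e := s))) differentiable (at (x e)))"

lemma pd_deriv:
  assumes "pdiff F"
  shows "((\<lambda>s. F (x(e := s))) has_real_derivative pd e F (x(e := s0))) (at s0)"
proof -
  have "(\<lambda>s. F ((x(e := s0))(e := s))) differentiable (at ((x(e := s0)) e))"
    using assms unfolding pdiff_def by blast
  hence "(\<lambda>s. F (x(e := s))) differentiable (at s0)" by simp
  hence "((\<lambda>s. F (x(e := s))) has_real_derivative deriv (\<lambda>s. F (x(e := s))) s0) (at s0)"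
    using DERIV_deriv_iff_real_differentiable by blast
  moreover have "pd e F (x(e := s0)) = deriv (\<lambda>s. F (x(e := s))) s0"
    unfolding pd_def by simp
  ultimately show ?thesis by simp
qed

lemma pd_eqI:
  assumes "\<And>x. ((\<lambda>s. F (x(e := s))) has_real_derivative g x) (at (x e))"
  shows "pd e F = g"
  unfolding pd_def using assms DERIV_imp_deriv by (intro ext) blast

lemma pdiffI:
  assumes "\<And>x e. \<exists>D. ((\<lambda>s. F (x(e := s))) has_real_derivative D) (at (x e))"
  shows "pdiff F"
  unfolding pdiff_def using assms real_differentiable_def by blast

lemma pd_outside:
  assumes "depends_only S F" "e \<notin> S"
  shows "pd e F = (\<lambda>_. 0)"
proof (rule pd_eqI)
  fix x
  have "\<forall>e'\<in>S. (x(e := s)) e' = x e'" for s :: real using assms(2) by auto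
  hence "(\<lambda>s. F (x(e := s))) = (\<lambda>s. F x)"
    using assms(1) unfolding depends_only_def by blast
  thus "((\<lambda>s. F (x(e := s))) has_real_derivative 0) (at (x e))" by simp
qed

lemma depends_pd:
  assumes "depends_only S F"
  shows "depends_only S (pd e F)"
proof (cases "e \<in> S")
  case True
  show ?thesis unfolding depends_only_def
  proof (intro allI impI)
    fix x y :: "('a, 'b) val" assume h: "\<forall>e\<in>S. x e = y e"
    have "\<forall>e'\<in>S. (x(e := s)) e' = (y(e := s)) e'" for s using h by auto
    hence "(\<lambda>s. F (x(e := s))) = (\<lambda>s. F (y(e := s)))"
      using assms unfolding depends_only_def by blast
    moreover have "x e = y e" using h True by blast
    ultimately show "pd e F x = pd e F y" unfolding pd_def by simp
  qed
next
  case False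
  then show ?thesis using pd_outside[OF assms False] unfolding depends_only_def by simp
qed

lemma iter_pd_append: "iter_pd (es @ [e]) F = iter_pd es (pd e F)"
  by (induction es) auto

lemma smooth_fnD:
  assumes "smooth_fn F"
  shows "continuous_on UNIV F" "pdiff F" "smooth_fn (pd e F)" "\<exists>S. finite S \<and> depends_only S F"
proof -
  obtain S where S: "finite S" "depends_only S F"
    "\<And>es. continuous_on UNIV (iter_pd es F)"
    "\<And>es e x. (\<lambda>s. iter_pd es F (x(e := s))) differentiable (at (x e))"
    using assms unfolding smooth_fn_def by blast
  show "continuous_on UNIV F" using S(3)[of "[]"] by simp
  show "pdiff F" using S(4)[of "[]"] unfolding pdiff_def by simp
  show "\<exists>S. finite S \<and> depends_only S F" using S by blast
  show "smooth_fn (pd e F)" unfolding smooth_fn_def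
  proof (intro exI[of _ S] conjI allI)
    show "finite S" by (rule S(1))
    show "depends_only S (pd e F)" by (rule depends_pd[OF S(2)])
    fix es e' x
    show "continuous_on UNIV (iter_pd es (pd e F))"
      using S(3)[of "es @ [e]"] by (simp add: iter_pd_append)
    show "(\<lambda>s. iter_pd es (pd e F) (x(e' := s))) differentiable at (x e')"
      using S(4)[of "es @ [e]"] by (simp add: iter_pd_append)
  qed
qed

lemma smooth_coind:
  assumes "F \<in> X" "\<exists>S. finite S \<and> depends_only S F"
    and "\<And>G. G \<in> X \<Longrightarrow> continuous_on UNIV G \<and> pdiff G \<and> (\<forall>e. pd e G \<in> X)"
  shows "smooth_fn F"
proof -
  have X: "iter_pd es F \<in> X" for es
  proof (induction es)
    case Nil show ?case using assms(1) by simp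
  next
    case (Cons e es)
    from assms(3)[OF Cons.IH] have "pd e (iter_pd es F) \<in> X" by blast
    thus ?case by simp
  qed
  obtain S where S: "finite S" "depends_only S F" using assms(2) by blast
  show ?thesis unfolding smooth_fn_def
  proof (intro exI[of _ S] conjI allI)
    fix es e x
    show "continuous_on UNIV (iter_pd es F)" using assms(3)[OF X[of es]] by blast
    show "(\<lambda>s. iter_pd es F (x(e := s))) differentiable at (x e)"
      using assms(3)[OF X[of es]] unfolding pdiff_def by blast
  qed (use S in auto)
qed

lemma smooth_deriv_at:
  assumes "smooth_fn F"
  shows "((\<lambda>s. F (x(e := s))) has_real_derivative pd e F x) (at (x e))"
  using pd_deriv[OF smooth_fnD(2)[OF assms], of x e "x e"] by simp

lemma pd_zero: "pd e (\<lambda>_. 0) = (\<lambda>_. 0)"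
  by (rule pd_eqI) simp

lemma smooth_zero: "smooth_fn (\<lambda>_. 0)"
  by (rule smooth_coind[of _ "{\<lambda>_. 0}"])
     (auto simp: pd_zero depends_only_def pdiff_def)

lemma smooth_add:
  assumes "smooth_fn F" "smooth_fn G"
  shows "smooth_fn (\<lambda>x. F x + G x)"
proof (rule smooth_coind[of _ "{\<lambda>x. F x + G x | F G. smooth_fn F \<and> smooth_fn G}"])
  show "(\<lambda>x. F x + G x) \<in> {\<lambda>x. F x + G x | F G. smooth_fn F \<and> smooth_fn G}" using assms by blast
  obtain S1 S2 where "finite S1" "depends_only S1 F" "finite S2" "depends_only S2 G"
    using smooth_fnD(4) assms by metis
  thus "\<exists>S. finite S \<and> depends_only S (\<lambda>x. F x + G x)"
  proof (intro exI[of _ "S1 \<union> S2"] conjI)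
    show "finite (S1 \<union> S2)" using \<open>finite S1\<close> \<open>finite S2\<close> by simp
    show "depends_only (S1 \<union> S2) (\<lambda>x. F x + G x)" unfolding depends_only_def
    proof (intro allI impI)
      fix x y :: "('a,'b) val" assume "\<forall>e\<in>S1 \<union> S2. x e = y e"
      hence "\<forall>e\<in>S1. x e = y e" "\<forall>e\<in>S2. x e = y e" by auto
      hence "F x = F y" "G x = G y" using \<open>depends_only S1 F\<close> \<open>depends_only S2 G\<close>
        unfolding depends_only_def by blast+
      thus "F x + G x = F y + G y" by simp
    qed
  qed
next
  fix H assume "H \<in> {\<lambda>x. F x + G x | F G. smooth_fn F \<and> smooth_fn G}"
  then obtain F G where H: "H = (\<lambda>x. F x + G x)" "smooth_fn F" "smooth_fn G" by blast
  have pdH: "pd e H = (\<lambda>x. pd e F x + pd e G x)" for e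
    unfolding H(1) by (rule pd_eqI, rule DERIV_add) (rule smooth_deriv_at, rule H)+
  show "continuous_on UNIV H \<and> pdiff H \<and> (\<forall>e. pd e H \<in> {\<lambda>x. F x + G x | F G. smooth_fn F \<and> smooth_fn G})"
  proof (intro conjI allI)
    show "continuous_on UNIV H" unfolding H(1)
      using smooth_fnD(1) H by (intro continuous_on_add) auto
    show "pdiff H" unfolding H(1)
      by (rule pdiffI, rule exI, rule DERIV_add) (rule smooth_deriv_at, rule H)+
    fix e show "pd e H \<in> {\<lambda>x. F x + G x | F G. smooth_fn F \<and> smooth_fn G}"
      unfolding pdH using H smooth_fnD(3) by blast
  qed
qed

lemma smooth_scale:
  assumes "smooth_fn F"
  shows "smooth_fn (\<lambda>x. c * F x)"
proof (rule smooth_coind[of _ "{\<lambda>x. c * F x | F. smooth_fn F}"])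
  show "(\<lambda>x. c * F x) \<in> {\<lambda>x. c * F x | F. smooth_fn F}" using assms by blast
  obtain S1 where "finite S1" "depends_only S1 F"
    using smooth_fnD(4) assms by metis
  thus "\<exists>S. finite S \<and> depends_only S (\<lambda>x. c * F x)"
    by (intro exI[of _ "S1"]) (auto simp: depends_only_def)
next
  fix H assume "H \<in> {\<lambda>x. c * F x | F. smooth_fn F}"
  then obtain F where H: "H = (\<lambda>x. c * F x)" "smooth_fn F" by blast
  have pdH: "pd e H = (\<lambda>x. c * pd e F x)" for e
    unfolding H(1) by (rule pd_eqI, rule DERIV_cmult) (rule smooth_deriv_at, rule H)
  show "continuous_on UNIV H \<and> pdiff H \<and> (\<forall>e. pd e H \<in> {\<lambda>x. c * F x | F. smooth_fn F})"
  proof (intro conjI allI)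
    show "continuous_on UNIV H" unfolding H(1)
      using smooth_fnD(1) H by (intro continuous_on_mult) auto
    show "pdiff H" unfolding H(1)
      by (rule pdiffI, rule exI, rule DERIV_cmult) (rule smooth_deriv_at, rule H)
    fix e show "pd e H \<in> {\<lambda>x. c * F x | F. smooth_fn F}"
      unfolding pdH using H smooth_fnD(3) by blast
  qed
qed

lemma smooth_sum:
  assumes "\<And>j. j \<in> J \<Longrightarrow> smooth_fn (H j)"
  shows "smooth_fn (\<lambda>x. \<Sum>j\<in>J. H j x)"
proof (cases "finite J")
  case True
  then show ?thesis using assms
    by (induction J rule: finite_induct) (auto simp: smooth_zero intro!: smooth_add)
qed (simp add: smooth_zero)

lemma DERIV_coord:
  "((\<lambda>s. (x(e := s)) c) has_real_derivative (if c = e then 1 else 0)) (at s0)"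
  by (cases "c = e") auto

lemma smooth_mulc:
  assumes "smooth_fn F"
  shows "smooth_fn (\<lambda>x. x c * F x)"
proof (rule smooth_coind[of _ "{\<lambda>x. x c * F x + G x | F G. smooth_fn F \<and> smooth_fn G}"])
  show "(\<lambda>x. x c * F x) \<in> {\<lambda>x. x c * F x + G x | F G. smooth_fn F \<and> smooth_fn G}"
    by (rule CollectI, rule exI[of _ F], rule exI[of _ "\<lambda>_. 0::real"]) (simp add: assms smooth_zero)
  obtain S1 where "finite S1" "depends_only S1 F"
    using smooth_fnD(4) assms by metis
  thus "\<exists>S. finite S \<and> depends_only S (\<lambda>x. x c * F x)"
    by (intro exI[of _ "insert c S1"]) (auto simp: depends_only_def)
next
  fix H assume "H \<in> {\<lambda>x. x c * F x + G x | F G. smooth_fn F \<and> smooth_fn G}"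
  then obtain F G where H: "H = (\<lambda>x. x c * F x + G x)" "smooth_fn F" "smooth_fn G" by blast
  have dF: "((\<lambda>s. F (x(e := s))) has_real_derivative pd e F x) (at (x e))" for x e
    using pd_deriv[OF smooth_fnD(2)[OF H(2)], of x e "x e"] by simp
  have dG: "((\<lambda>s. G (x(e := s))) has_real_derivative pd e G x) (at (x e))" for x e
    using pd_deriv[OF smooth_fnD(2)[OF H(3)], of x e "x e"] by simp
  have pdH: "pd e H = (\<lambda>x. x c * pd e F x + ((if c = e then F x else 0) + pd e G x))" for e
    unfolding H(1)
  proof (rule pd_eqI)
    fix x
    have dd: "((\<lambda>s. (x(e := s)) c * F (x(e := s)) + G (x(e := s))) has_real_derivative
        ((x(e := x e)) c * pd e F x + (if c = e then 1 else 0) * F (x(e := x e)) + pd e G x)) (at (x e))"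
      by (intro DERIV_add DERIV_mult' DERIV_coord dF dG)
    show "((\<lambda>s. (x(e := s)) c * F (x(e := s)) + G (x(e := s))) has_real_derivative
        x c * pd e F x + ((if c = e then F x else 0) + pd e G x)) (at (x e))"
      by (rule DERIV_cong[OF dd]) simp
  qed
  have pH: "pdiff H"
  proof (rule pdiffI)
    fix x e
    show "\<exists>D. ((\<lambda>s. H (x(e := s))) has_real_derivative D) (at (x e))"
      unfolding H(1) by (rule exI, rule DERIV_add, rule DERIV_mult', rule DERIV_coord, rule dF, rule dG)
  qed
  show "continuous_on UNIV H \<and> pdiff H \<and> (\<forall>e. pd e H \<in> {\<lambda>x. x c * F x + G x | F G. smooth_fn F \<and> smooth_fn G})"
  proof (intro conjI allI pH)
    show "continuous_on UNIV H" unfolding H(1)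
      by (intro continuous_on_add continuous_on_mult continuous_on_product_coordinates smooth_fnD(1) H(2) H(3))
    fix e
    have sm: "smooth_fn (\<lambda>x. (if c = e then F x else 0) + pd e G x)"
    proof (rule smooth_add)
      show "smooth_fn (\<lambda>x. if c = e then F x else 0)"
        using H(2) smooth_zero by (cases "c = e") auto
      show "smooth_fn (pd e G)" by (rule smooth_fnD(3)[OF H(3)])
    qed
    show "pd e H \<in> {\<lambda>x. x c * F x + G x | F G. smooth_fn F \<and> smooth_fn G}"
      unfolding pdH by (rule CollectI, rule exI[of _ "pd e F"],
          rule exI[of _ "\<lambda>x. (if c = e then F x else 0) + pd e G x"])
        (simp add: smooth_fnD(3)[OF H(2)] sm)
  qed
qed

lemma smooth_pd_deriv:
  assumes "smooth_fn F"
  shows "((\<lambda>s. F (x(e := s))) has_real_derivative pd e F (x(e := s0))) (at s0)"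
  using pd_deriv[OF smooth_fnD(2)[OF assms]] .

lemma abs_aux:
  fixes p q a b :: real
  assumes "\<bar>p - a\<bar> < \<bar>a - b\<bar> / 2" "\<bar>q - b\<bar> < \<bar>a - b\<bar> / 2" "p = q"
  shows False
  using assms by (cases "a \<le> b"; cases "p \<le> a"; cases "q \<le> b") (simp_all add: abs_if split: if_splits)

lemma schwarz:
  assumes F: "smooth_fn F"
  shows "pd a (pd b F) = pd b (pd a F)"
proof (rule ext)
  fix x :: "('a, 'b) val"
  show "pd a (pd b F) x = pd b (pd a F) x"
  proof (cases "a = b")
    case True then show ?thesis by simp
  next
    case ab: False
    define P where "P = pd a F"
    define Q where "Q = pd b F"
    define A2 where "A2 = pd b P"
    define B2 where "B2 = pd a Q"
    have sP: "smooth_fn P" and sQ: "smooth_fn Q" and sA2: "smooth_fn A2" and sB2: "smooth_fn B2"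
      using F smooth_fnD(3) unfolding P_def Q_def A2_def B2_def by blast+
    define Y where "Y = (\<lambda>z::real \<times> real. x(a := fst z, b := snd z))"
    have Yx: "Y (x a, x b) = x" unfolding Y_def by simp
    have contY: "continuous_on UNIV Y"
    proof (rule continuous_on_coordinatewise_then_product)
      fix c :: "('a, 'b) idx"
      show "continuous_on UNIV (\<lambda>z. Y z c)"
        by (cases "c = b"; cases "c = a") (simp_all add: Y_def continuous_on_fst continuous_on_snd)
    qed
    have cA: "isCont (\<lambda>z. A2 (Y z)) (x a, x b)" and cB: "isCont (\<lambda>z. B2 (Y z)) (x a, x b)"
    proof -
      have "continuous_on UNIV (\<lambda>z. A2 (Y z))"
        using continuous_on_compose[OF contY, of A2] smooth_fnD(1)[OF sA2]
        by (simp add: o_def continuous_on_subset)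
      thus "isCont (\<lambda>z. A2 (Y z)) (x a, x b)" by (simp add: continuous_on_eq_continuous_at)
      have "continuous_on UNIV (\<lambda>z. B2 (Y z))"
        using continuous_on_compose[OF contY, of B2] smooth_fnD(1)[OF sB2]
        by (simp add: o_def continuous_on_subset)
      thus "isCont (\<lambda>z. B2 (Y z)) (x a, x b)" by (simp add: continuous_on_eq_continuous_at)
    qed
    have Ya: "(Y (s', u))(a := s) = Y (s, u)" for s s' u
      unfolding Y_def using ab by (simp add: fun_upd_twist)
    have Yb: "(Y (s, u'))(b := u) = Y (s, u)" for s u u'
      unfolding Y_def using ab by simp
    have dFa: "((\<lambda>s. F (Y (s, u))) has_real_derivative P (Y (s0, u))) (at s0)" for s0 u
      using smooth_pd_deriv[OF F, of "Y (s0, u)" a s0] unfolding Ya P_def .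
    have dFb: "((\<lambda>u. F (Y (s, u))) has_real_derivative Q (Y (s, u0))) (at u0)" for s u0
      using smooth_pd_deriv[OF F, of "Y (s, u0)" b u0] unfolding Yb Q_def .
    have dPb: "((\<lambda>u. P (Y (s, u))) has_real_derivative A2 (Y (s, u0))) (at u0)" for s u0
      using smooth_pd_deriv[OF sP, of "Y (s, u0)" b u0] unfolding Yb A2_def .
    have dQa: "((\<lambda>s. Q (Y (s, u))) has_real_derivative B2 (Y (s0, u))) (at s0)" for s0 u
      using smooth_pd_deriv[OF sQ, of "Y (s0, u)" a s0] unfolding Ya B2_def .
    define s0 where "s0 = x a"
    define u0 where "u0 = x b"
    have key: "\<exists>s u s' u'. \<bar>s - s0\<bar> < h \<and> \<bar>u - u0\<bar> < h \<and> \<bar>s' - s0\<bar> < h \<and> \<bar>u' - u0\<bar> < h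
       \<and> A2 (Y (s, u)) = B2 (Y (s', u'))" if h: "h > 0" for h
    proof -
      define D where "D = F (Y (s0 + h, u0 + h)) - F (Y (s0 + h, u0)) - F (Y (s0, u0 + h)) + F (Y (s0, u0))"
      obtain s where s: "s0 < s" "s < s0 + h"
        "(F (Y (s0 + h, u0 + h)) - F (Y (s0 + h, u0))) - (F (Y (s0, u0 + h)) - F (Y (s0, u0)))
         = (s0 + h - s0) * (P (Y (s, u0 + h)) - P (Y (s, u0)))"
      proof -
        have "\<exists>z. s0 < z \<and> z < s0 + h \<and> (F (Y (s0 + h, u0 + h)) - F (Y (s0 + h, u0))) - (F (Y (s0, u0 + h)) - F (Y (s0, u0)))
         = (s0 + h - s0) * (P (Y (z, u0 + h)) - P (Y (z, u0)))"
          by (rule MVT2[of s0 "s0 + h" "\<lambda>s. F (Y (s, u0 + h)) - F (Y (s, u0))"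
            "\<lambda>s. P (Y (s, u0 + h)) - P (Y (s, u0))"]) (use h in simp, rule DERIV_diff, rule dFa, rule dFa)
        thus ?thesis using that by blast
      qed
      obtain u where u: "u0 < u" "u < u0 + h"
        "P (Y (s, u0 + h)) - P (Y (s, u0)) = (u0 + h - u0) * A2 (Y (s, u))"
      proof -
        have "\<exists>z. u0 < z \<and> z < u0 + h \<and> P (Y (s, u0 + h)) - P (Y (s, u0)) = (u0 + h - u0) * A2 (Y (s, z))"
          by (rule MVT2[of u0 "u0 + h" "\<lambda>u. P (Y (s, u))" "\<lambda>u. A2 (Y (s, u))"]) (use h in simp, rule dPb)
        thus ?thesis using that by blast
      qed
      obtain u' where u': "u0 < u'" "u' < u0 + h"
        "(F (Y (s0 + h, u0 + h)) - F (Y (s0, u0 + h))) - (F (Y (s0 + h, u0)) - F (Y (s0, u0)))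
         = (u0 + h - u0) * (Q (Y (s0 + h, u')) - Q (Y (s0, u')))"
      proof -
        have "\<exists>z. u0 < z \<and> z < u0 + h \<and> (F (Y (s0 + h, u0 + h)) - F (Y (s0, u0 + h))) - (F (Y (s0 + h, u0)) - F (Y (s0, u0)))
         = (u0 + h - u0) * (Q (Y (s0 + h, z)) - Q (Y (s0, z)))"
          by (rule MVT2[of u0 "u0 + h" "\<lambda>u. F (Y (s0 + h, u)) - F (Y (s0, u))"
            "\<lambda>u. Q (Y (s0 + h, u)) - Q (Y (s0, u))"]) (use h in simp, rule DERIV_diff, rule dFb, rule dFb)
        thus ?thesis using that by blast
      qed
      obtain s' where s': "s0 < s'" "s' < s0 + h"
        "Q (Y (s0 + h, u')) - Q (Y (s0, u')) = (s0 + h - s0) * B2 (Y (s', u'))"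
      proof -
        have "\<exists>z. s0 < z \<and> z < s0 + h \<and> Q (Y (s0 + h, u')) - Q (Y (s0, u')) = (s0 + h - s0) * B2 (Y (z, u'))"
          by (rule MVT2[of s0 "s0 + h" "\<lambda>s. Q (Y (s, u'))" "\<lambda>s. B2 (Y (s, u'))"]) (use h in simp, rule dQa)
        thus ?thesis using that by blast
      qed
      have "h * (h * A2 (Y (s, u))) = h * (h * B2 (Y (s', u')))"
        using s(3) u(3) u'(3) s'(3) by (simp add: algebra_simps)
      hence "A2 (Y (s, u)) = B2 (Y (s', u'))" using h by simp
      thus ?thesis using s u s' u' by (intro exI[of _ s] exI[of _ u] exI[of _ s'] exI[of _ u']) auto
    qed
    show ?thesis
    proof (rule ccontr)
      assume ne: "pd a (pd b F) x \<noteq> pd b (pd a F) x"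
      define d where "d = \<bar>A2 x - B2 x\<bar>"
      have d: "d > 0" using ne unfolding d_def A2_def B2_def P_def Q_def by simp
      obtain d1 where d1: "d1 > 0" "\<And>z. dist z (s0, u0) < d1 \<Longrightarrow> dist (A2 (Y z)) (A2 (Y (s0, u0))) < d / 2"
        using cA d unfolding continuous_at_eps_delta s0_def u0_def
        by (metis half_gt_zero)
      obtain d2 where d2: "d2 > 0" "\<And>z. dist z (s0, u0) < d2 \<Longrightarrow> dist (B2 (Y z)) (B2 (Y (s0, u0))) < d / 2"
        using cB d unfolding continuous_at_eps_delta s0_def u0_def
        by (metis half_gt_zero)
      define h where "h = min d1 d2 / 2"
      have h: "h > 0" using d1 d2 unfolding h_def by simp
      obtain s u s' u' where su: "\<bar>s - s0\<bar> < h" "\<bar>u - u0\<bar> < h" "\<bar>s' - s0\<bar> < h" "\<bar>u' - u0\<bar> < h"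
        "A2 (Y (s, u)) = B2 (Y (s', u'))" using key[OF h] by blast
      have dist_bound: "dist (p, q) (s0, u0) < min d1 d2" if "\<bar>p - s0\<bar> < h" "\<bar>q - u0\<bar> < h" for p q
      proof -
        have "dist (p, q) (s0, u0) = sqrt ((p - s0)\<^sup>2 + (q - u0)\<^sup>2)"
          by (simp add: dist_Pair_Pair dist_real_def)
        also have "\<dots> \<le> \<bar>p - s0\<bar> + \<bar>q - u0\<bar>" by (rule sqrt_sum_squares_le_sum_abs)
        also have "\<dots> < min d1 d2" using that unfolding h_def by simp
        finally show ?thesis .
      qed
      have e1: "\<bar>A2 (Y (s, u)) - A2 x\<bar> < d / 2"
        using d1(2)[of "(s, u)"] dist_bound[OF su(1,2)] Yx unfolding s0_def u0_def dist_real_def by simp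
      have e2: "\<bar>B2 (Y (s', u')) - B2 x\<bar> < d / 2"
        using d2(2)[of "(s', u')"] dist_bound[OF su(3,4)] Yx unfolding s0_def u0_def dist_real_def by simp
      show False using abs_aux[OF e1[unfolded d_def] e2[unfolded d_def] su(5)] .
    qed
  qed
qed

lemma pdx_eq:
  assumes "finite T" "\<And>e. e \<notin> T \<Longrightarrow> pd e F = (\<lambda>_. 0)"
  shows "pdx i F x = (\<Sum>e\<in>T. x (shift i e) * pd e F x)"
proof -
  have sub: "{e. pd e F \<noteq> (\<lambda>_. 0)} \<subseteq> T" using assms(2) by blast
  have "(\<Sum>e\<in>{e. pd e F \<noteq> (\<lambda>_. 0)}. x (shift i e) * pd e F x) = (\<Sum>e\<in>T. x (shift i e) * pd e F x)"
    by (rule sum.mono_neutral_left[OF assms(1) sub]) auto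
  thus ?thesis unfolding pdx_def by simp
qed

lemma smooth_pdx:
  assumes "smooth_fn F"
  shows "smooth_fn (pdx i F)"
proof -
  obtain S where S: "finite S" "depends_only S F" using smooth_fnD(4)[OF assms] by blast
  have "pdx i F = (\<lambda>x. \<Sum>e\<in>S. x (shift i e) * pd e F x)"
    by (rule ext, rule pdx_eq[OF S(1)]) (rule pd_outside[OF S(2)])
  moreover have "smooth_fn (\<lambda>x. \<Sum>e\<in>S. x (shift i e) * pd e F x)"
    by (rule smooth_sum, rule smooth_mulc, rule smooth_fnD(3)[OF assms])
  ultimately show ?thesis by simp
qed

lemma shift_eq:
  "shift i e = q \<longleftrightarrow> (1 \<le> snd q i \<and> e = (fst q, (snd q)(i := snd q i - 1)))"
proof
  assume h: "shift i e = q"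
  hence "fst q = fst e" "snd q = (snd e)(i := snd e i + 1)" unfolding shift_def by auto
  thus "1 \<le> snd q i \<and> e = (fst q, (snd q)(i := snd q i - 1))"
    by (auto simp: fun_eq_iff prod_eq_iff)
next
  assume "1 \<le> snd q i \<and> e = (fst q, (snd q)(i := snd q i - 1))"
  thus "shift i e = q" unfolding shift_def by (auto simp: fun_eq_iff prod_eq_iff)
qed

lemma pd_pdx:
  assumes F: "smooth_fn F"
  shows "pd q (pdx i F) = (\<lambda>x. pdx i (pd q F) x +
     (if 1 \<le> snd q i then pd (fst q, (snd q)(i := snd q i - 1)) F x else 0))"
proof -
  define q' where "q' = (fst q, (snd q)(i := snd q i - 1))"
  obtain S where S: "finite S" "depends_only S F" using smooth_fnD(4)[OF F] by blast
  define T where "T = insert q' S"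
  have T: "finite T" using S(1) unfolding T_def by simp
  have outF: "e \<notin> T \<Longrightarrow> pd e F = (\<lambda>_. 0)" for e
    using pd_outside[OF S(2)] unfolding T_def by blast
  have outoF: "e \<notin> T \<Longrightarrow> pd e (pd q F) = (\<lambda>_. 0)" for e
    using pd_outside[OF depends_pd[OF S(2)]] unfolding T_def by blast
  have eq1: "pdx i F = (\<lambda>x. \<Sum>e\<in>T. x (shift i e) * pd e F x)"
    by (rule ext, rule pdx_eq[OF T outF])
  have eq2: "pdx i (pd q F) x = (\<Sum>e\<in>T. x (shift i e) * pd e (pd q F) x)" for x
    by (rule pdx_eq[OF T outoF])
  have sm: "smooth_fn (pd e F)" for e using smooth_fnD(3)[OF F] .
  show ?thesis unfolding eq1
  proof (rule pd_eqI)
    fix x :: "('a, 'b) val"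
    have d: "((\<lambda>s. \<Sum>e\<in>T. (x(q := s)) (shift i e) * pd e F (x(q := s))) has_real_derivative
         (\<Sum>e\<in>T. (x(q := x q)) (shift i e) * pd q (pd e F) x + (if shift i e = q then 1 else 0) * pd e F (x(q := x q)))) (at (x q))"
      by (rule DERIV_sum, rule DERIV_mult', rule DERIV_coord, rule smooth_deriv_at[OF sm])
    have "(\<Sum>e\<in>T. (x(q := x q)) (shift i e) * pd q (pd e F) x + (if shift i e = q then 1 else 0) * pd e F (x(q := x q)))
       = (\<Sum>e\<in>T. x (shift i e) * pd e (pd q F) x) + (\<Sum>e\<in>T. if e = q' \<and> 1 \<le> snd q i then pd e F x else 0)"
      unfolding sum.distrib[symmetric] using schwarz[OF F, of q]
      by (intro sum.cong refl) (auto simp: shift_eq q'_def)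
    also have "(\<Sum>e\<in>T. if e = q' \<and> 1 \<le> snd q i then pd e F x else 0) =
        (if 1 \<le> snd q i then pd q' F x else 0)"
      using T by (cases "1 \<le> snd q i") (simp_all add: T_def)
    finally show "((\<lambda>s. \<Sum>e\<in>T. (x(q := s)) (shift i e) * pd e F (x(q := s))) has_real_derivative
        pdx i (pd q F) x + (if 1 \<le> snd q i then pd (fst q, (snd q)(i := snd q i - 1)) F x else 0)) (at (x q))"
      using d unfolding eq2 q'_def by simp
  qed
qed

definition goodD :: "('l, 'i) dfn \<Rightarrow> bool" where
  "goodD G \<longleftrightarrow> (\<forall>\<alpha>. smooth_fn (G \<alpha>))"

lemma validD_out: "validD E ks \<alpha> \<Longrightarrow> e \<notin> E \<Longrightarrow> \<alpha> e = 0"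
  unfolding validD_def by blast

lemma validD_le: "validD E ks \<alpha> \<Longrightarrow> \<alpha> e \<le> ks"
  unfolding validD_def by blast

lemma validD_dec:
  assumes "validD E ks \<alpha>" shows "validD E ks (\<alpha>(e := \<alpha> e - 1))"
proof -
  have "(\<alpha>(e := \<alpha> e - 1)) e' = 0" if "e' \<notin> E" for e'
    using validD_out[OF assms that] by (cases "e' = e") auto
  moreover have "(\<alpha>(e := \<alpha> e - 1)) e' \<le> ks" for e'
    using validD_le[OF assms, of e'] validD_le[OF assms, of e] by (cases "e' = e") auto
  ultimately show ?thesis unfolding validD_def by blast
qed

lemma mult_if0: "c * (if b then y else 0) = (if b then c * y else (0::real))"
  by simp

lemma sum_if0: "(\<Sum>j\<in>J. if b then f j else 0) = (if b then sum f J else (0::real))"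
  by (cases b) simp_all

lemma smooth_if0: "(b \<Longrightarrow> smooth_fn F) \<Longrightarrow> smooth_fn (\<lambda>x. if b then F x else 0)"
  using smooth_zero by (cases b) auto

lemma smooth_mulc': "smooth_fn F \<Longrightarrow> smooth_fn (\<lambda>x. F x * x c)"
  using smooth_mulc[of F c] by (simp add: mult.commute)

lemma Dhat_good:
  assumes "goodD G" shows "goodD (Dhat E ks q G)"
  unfolding goodD_def Dhat_def
proof
  fix \<alpha>
  show "smooth_fn (if validD E ks \<alpha> then \<lambda>x. pd q (G \<alpha>) x + (if q \<in> E \<and> 1 \<le> \<alpha> q then G (\<alpha>(q := \<alpha> q - 1)) x else 0)
         else (\<lambda>_. 0))"
    using assms unfolding goodD_def
    by (auto intro!: smooth_add smooth_if0 smooth_fnD(3) simp: smooth_zero)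
qed

lemma dhat_good:
  assumes "goodD G" shows "goodD (dhat E ks i G)"
  unfolding goodD_def dhat_def
proof
  fix \<alpha>
  show "smooth_fn (if validD E ks \<alpha> then \<lambda>x. pdx i (G \<alpha>) x +
          (\<Sum>e\<in>E. if 1 \<le> \<alpha> e then G (\<alpha>(e := \<alpha> e - 1)) x * x (shift i e) else 0)
         else (\<lambda>_. 0))"
    using assms unfolding goodD_def
    by (auto intro!: smooth_add smooth_if0 smooth_pdx smooth_sum smooth_mulc' simp: smooth_zero)
qed

lemma pd_lin:
  assumes "\<And>j. j \<in> J \<Longrightarrow> smooth_fn (H j)"
  shows "pd e (\<lambda>x. \<Sum>j\<in>J. c j * H j x) = (\<lambda>x. \<Sum>j\<in>J. c j * pd e (H j) x)"
  by (rule pd_eqI, rule DERIV_sum, rule DERIV_cmult, rule smooth_deriv_at, rule assms)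

lemma pd_add:
  assumes "smooth_fn F" "smooth_fn G"
  shows "pd e (\<lambda>x. F x + G x) = (\<lambda>x. pd e F x + pd e G x)"
  by (rule pd_eqI, rule DERIV_add) (rule smooth_deriv_at, rule assms)+

lemma pd_if0: "pd e (\<lambda>x. if b then F x else 0) = (\<lambda>x. if b then pd e F x else 0)"
  by (cases b) (simp_all add: pd_zero)

lemma pdx_lin:
  assumes J: "finite J" and H: "\<And>j. j \<in> J \<Longrightarrow> smooth_fn (H j)"
  shows "pdx i (\<lambda>x. \<Sum>j\<in>J. c j * H j x) x = (\<Sum>j\<in>J. c j * pdx i (H j) x)"
proof -
  have "\<forall>j\<in>J. \<exists>S. finite S \<and> depends_only S (H j)" using H smooth_fnD(4) by blast
  then obtain S where S: "\<And>j. j \<in> J \<Longrightarrow> finite (S j) \<and> depends_only (S j) (H j)" by metis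
  define T where "T = (\<Union>j\<in>J. S j)"
  have T: "finite T" unfolding T_def using J S by auto
  have out: "e \<notin> T \<Longrightarrow> j \<in> J \<Longrightarrow> pd e (H j) = (\<lambda>_. 0)" for e j
    using pd_outside[of "S j" "H j" e] S unfolding T_def by blast
  have "pdx i (\<lambda>x. \<Sum>j\<in>J. c j * H j x) x = (\<Sum>e\<in>T. x (shift i e) * pd e (\<lambda>x. \<Sum>j\<in>J. c j * H j x) x)"
    by (rule pdx_eq[OF T]) (simp add: pd_lin[OF H] out fun_eq_iff)
  also have "\<dots> = (\<Sum>e\<in>T. x (shift i e) * (\<Sum>j\<in>J. c j * pd e (H j) x))"
    by (simp add: pd_lin[OF H])
  also have "\<dots> = (\<Sum>j\<in>J. c j * (\<Sum>e\<in>T. x (shift i e) * pd e (H j) x))"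
    by (simp add: sum_distrib_left sum.swap[of _ T] algebra_simps)
  also have "\<dots> = (\<Sum>j\<in>J. c j * pdx i (H j) x)"
    by (intro sum.cong refl arg_cong2[where f="(*)"] pdx_eq[OF T, symmetric] out) auto
  finally show ?thesis .
qed

lemma pdx_zero: "pdx i (\<lambda>_. 0) = (\<lambda>_. 0)"
  unfolding pdx_def by (simp add: pd_zero)

lemma pdx_add:
  assumes "smooth_fn F" "smooth_fn G"
  shows "pdx i (\<lambda>x. F x + G x) x = pdx i F x + pdx i G x"
  using pdx_lin[of "UNIV :: bool set" "\<lambda>b. if b then G else F" i "\<lambda>_. 1" x] assms
  by (simp add: UNIV_bool)

lemma pdx_if0: "pdx i (\<lambda>x. if b then F x else 0) x = (if b then pdx i F x else 0)"
  by (cases b) (simp_all add: pdx_zero)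

lemma Dhat_lin:
  assumes J: "finite J" and H: "\<And>j. j \<in> J \<Longrightarrow> goodD (H j)"
  shows "Dhat E ks q (\<lambda>\<alpha> x. \<Sum>j\<in>J. c j * H j \<alpha> x) = (\<lambda>\<alpha> x. \<Sum>j\<in>J. c j * Dhat E ks q (H j) \<alpha> x)"
proof (intro ext)
  fix \<alpha> x
  have sm: "j \<in> J \<Longrightarrow> smooth_fn (H j \<beta>)" for j \<beta> using H unfolding goodD_def by blast
  show "Dhat E ks q (\<lambda>\<alpha> x. \<Sum>j\<in>J. c j * H j \<alpha> x) \<alpha> x = (\<Sum>j\<in>J. c j * Dhat E ks q (H j) \<alpha> x)"
    unfolding Dhat_def
    by (cases "q \<in> E \<and> 1 \<le> \<alpha> q"; cases "validD E ks \<alpha>")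
       (simp_all only: pd_lin[OF sm] sum.distrib sum_distrib_left if_True if_False mult_zero_right
          sum.neutral_const add_0_right distrib_left simp_thms)
qed

lemma dhat_lin:
  assumes J: "finite J" and H: "\<And>j. j \<in> J \<Longrightarrow> goodD (H j)"
  shows "dhat E ks i (\<lambda>\<alpha> x. \<Sum>j\<in>J. c j * H j \<alpha> x) = (\<lambda>\<alpha> x. \<Sum>j\<in>J. c j * dhat E ks i (H j) \<alpha> x)"
proof (intro ext)
  fix \<alpha> x
  have sm: "j \<in> J \<Longrightarrow> smooth_fn (H j \<beta>)" for j \<beta> using H unfolding goodD_def by blast
  have "(\<Sum>e\<in>E. if 1 \<le> \<alpha> e then (\<Sum>j\<in>J. c j * H j (\<alpha>(e := \<alpha> e - 1)) x) * x (shift i e) else 0)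
     = (\<Sum>j\<in>J. c j * (\<Sum>e\<in>E. if 1 \<le> \<alpha> e then H j (\<alpha>(e := \<alpha> e - 1)) x * x (shift i e) else 0))"
  proof -
    have "(\<Sum>e\<in>E. if 1 \<le> \<alpha> e then (\<Sum>j\<in>J. c j * H j (\<alpha>(e := \<alpha> e - 1)) x) * x (shift i e) else 0)
      = (\<Sum>e\<in>E. \<Sum>j\<in>J. if 1 \<le> \<alpha> e then c j * (H j (\<alpha>(e := \<alpha> e - 1)) x * x (shift i e)) else 0)"
      by (intro sum.cong refl) (simp add: sum_if0 sum_distrib_left sum_distrib_right mult_ac)
    also have "\<dots> = (\<Sum>j\<in>J. \<Sum>e\<in>E. if 1 \<le> \<alpha> e then c j * (H j (\<alpha>(e := \<alpha> e - 1)) x * x (shift i e)) else 0)"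
      by (rule sum.swap)
    also have "\<dots> = (\<Sum>j\<in>J. c j * (\<Sum>e\<in>E. if 1 \<le> \<alpha> e then H j (\<alpha>(e := \<alpha> e - 1)) x * x (shift i e) else 0))"
      by (intro sum.cong refl) (simp add: sum_distrib_left mult_if0)
    finally show ?thesis .
  qed
  then show "dhat E ks i (\<lambda>\<alpha> x. \<Sum>j\<in>J. c j * H j \<alpha> x) \<alpha> x = (\<Sum>j\<in>J. c j * dhat E ks i (H j) \<alpha> x)"
    unfolding dhat_def
    by (simp add: pdx_lin[OF J sm] sum.distrib sum_distrib_left algebra_simps)
qed

lemma pd_sum:
  assumes "\<And>j. j \<in> J \<Longrightarrow> smooth_fn (H j)"
  shows "pd e (\<lambda>x. \<Sum>j\<in>J. H j x) = (\<lambda>x. \<Sum>j\<in>J. pd e (H j) x)"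
  using pd_lin[of J H e "\<lambda>_. 1"] assms by simp

lemma pd_mulc':
  assumes "smooth_fn F"
  shows "pd e (\<lambda>x. F x * x c) = (\<lambda>x. pd e F x * x c + (if c = e then F x else 0))"
proof (rule pd_eqI)
  fix x :: "('a, 'b) val"
  have d: "((\<lambda>s. F (x(e := s)) * (x(e := s)) c) has_real_derivative
      pd e F x * (x(e := x e)) c + (if c = e then 1 else 0) * F (x(e := x e))) (at (x e))"
    by (rule DERIV_mult, rule smooth_deriv_at[OF assms], rule DERIV_coord)
  show "((\<lambda>s. F (x(e := s)) * (x(e := s)) c) has_real_derivative
      pd e F x * x c + (if c = e then F x else 0)) (at (x e))"
    by (rule DERIV_cong[OF d]) simp
qed

lemma alg:
  fixes L M A B C D1 P S2 R S2' Q W :: real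
  assumes "L = M + (if b then P + S2 else 0)" "M = A + (if c then B else 0) + C + D1"
    "R = A + (if b then P else 0) + C + S2'" "Q = B + W" "D1 = (if c then W else 0)"
    "(if b then S2 else 0) = S2'"
  shows "L = R + (if c then Q else 0)"
  using assms by (cases b; cases c) simp_all

lemma comm:
  assumes G: "goodD G" and E: "finite E"
  shows "Dhat E ks q (dhat E ks i G) = (\<lambda>\<alpha> x. dhat E ks i (Dhat E ks q G) \<alpha> x +
     (if 1 \<le> snd q i then Dhat E ks (fst q, (snd q)(i := snd q i - 1)) G \<alpha> x else 0))"
proof (intro ext)
  fix \<alpha> x
  have sm: "smooth_fn (G \<beta>)" for \<beta> using G unfolding goodD_def by blast
  define q' where "q' = (fst q, (snd q)(i := snd q i - 1))"
  define c where "c = (1 \<le> snd q i)"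
  show "Dhat E ks q (dhat E ks i G) \<alpha> x = dhat E ks i (Dhat E ks q G) \<alpha> x +
     (if 1 \<le> snd q i then Dhat E ks (fst q, (snd q)(i := snd q i - 1)) G \<alpha> x else 0)"
  proof (cases "validD E ks \<alpha>")
    case False
    then show ?thesis by (simp add: Dhat_def dhat_def)
  next
    case v: True
    have vd: "validD E ks (\<alpha>(e := \<alpha> e - 1))" for e using validD_dec[OF v] .
    have smS: "smooth_fn (\<lambda>x. \<Sum>e\<in>E. if 1 \<le> \<alpha> e then G (\<alpha>(e := \<alpha> e - 1)) x * x (shift i e) else 0)"
      by (intro smooth_sum smooth_if0 smooth_mulc' sm)
    have L1: "dhat E ks i G \<alpha> = (\<lambda>x. pdx i (G \<alpha>) x +
        (\<Sum>e\<in>E. if 1 \<le> \<alpha> e then G (\<alpha>(e := \<alpha> e - 1)) x * x (shift i e) else 0))"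
      using v by (simp add: dhat_def)
    have L2: "pd q (dhat E ks i G \<alpha>) x = pdx i (pd q (G \<alpha>)) x + (if c then pd q' (G \<alpha>) x else 0)
        + (\<Sum>e\<in>E. if 1 \<le> \<alpha> e then pd q (G (\<alpha>(e := \<alpha> e - 1))) x * x (shift i e) else 0)
        + (\<Sum>e\<in>E. if 1 \<le> \<alpha> e \<and> shift i e = q then G (\<alpha>(e := \<alpha> e - 1)) x else 0)"
    proof -
      have "pd q (dhat E ks i G \<alpha>) x = pd q (pdx i (G \<alpha>)) x +
          pd q (\<lambda>x. \<Sum>e\<in>E. if 1 \<le> \<alpha> e then G (\<alpha>(e := \<alpha> e - 1)) x * x (shift i e) else 0) x"
        by (simp only: L1 pd_add[OF smooth_pdx[OF sm] smS])
      also have "pd q (\<lambda>x. \<Sum>e\<in>E. if 1 \<le> \<alpha> e then G (\<alpha>(e := \<alpha> e - 1)) x * x (shift i e) else 0) x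
          = (\<Sum>e\<in>E. if 1 \<le> \<alpha> e then pd q (G (\<alpha>(e := \<alpha> e - 1))) x * x (shift i e)
               + (if shift i e = q then G (\<alpha>(e := \<alpha> e - 1)) x else 0) else 0)"
      proof (subst pd_sum)
        show "\<And>e. e \<in> E \<Longrightarrow> smooth_fn (\<lambda>x. if 1 \<le> \<alpha> e then G (\<alpha>(e := \<alpha> e - 1)) x * x (shift i e) else 0)"
          by (intro smooth_if0 smooth_mulc' sm)
        show "(\<Sum>e\<in>E. pd q (\<lambda>x. if 1 \<le> \<alpha> e then G (\<alpha>(e := \<alpha> e - 1)) x * x (shift i e) else 0) x) =
          (\<Sum>e\<in>E. if 1 \<le> \<alpha> e then pd q (G (\<alpha>(e := \<alpha> e - 1))) x * x (shift i e)
               + (if shift i e = q then G (\<alpha>(e := \<alpha> e - 1)) x else 0) else 0)"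
        proof (intro sum.cong refl)
          fix e
          have "pd q (\<lambda>x. if 1 \<le> \<alpha> e then G (\<alpha>(e := \<alpha> e - 1)) x * x (shift i e) else 0) x
             = (if 1 \<le> \<alpha> e then pd q (\<lambda>x. G (\<alpha>(e := \<alpha> e - 1)) x * x (shift i e)) x else 0)"
            by (simp only: pd_if0)
          also have "pd q (\<lambda>x. G (\<alpha>(e := \<alpha> e - 1)) x * x (shift i e)) x =
              pd q (G (\<alpha>(e := \<alpha> e - 1))) x * x (shift i e) + (if shift i e = q then G (\<alpha>(e := \<alpha> e - 1)) x else 0)"
            by (simp only: pd_mulc'[OF sm])
          finally show "pd q (\<lambda>x. if 1 \<le> \<alpha> e then G (\<alpha>(e := \<alpha> e - 1)) x * x (shift i e) else 0) x =
              (if 1 \<le> \<alpha> e then pd q (G (\<alpha>(e := \<alpha> e - 1))) x * x (shift i e)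
               + (if shift i e = q then G (\<alpha>(e := \<alpha> e - 1)) x else 0) else 0)"
            by (simp add:)
        qed
      qed
      also have "\<dots> = (\<Sum>e\<in>E. if 1 \<le> \<alpha> e then pd q (G (\<alpha>(e := \<alpha> e - 1))) x * x (shift i e) else 0)
        + (\<Sum>e\<in>E. if 1 \<le> \<alpha> e \<and> shift i e = q then G (\<alpha>(e := \<alpha> e - 1)) x else 0)"
        unfolding sum.distrib[symmetric] by (intro sum.cong refl) auto
      finally show ?thesis by (simp add: pd_pdx[OF sm] c_def q'_def)
    qed
    have L3: "Dhat E ks q (dhat E ks i G) \<alpha> x = pd q (dhat E ks i G \<alpha>) x +
        (if q \<in> E \<and> 1 \<le> \<alpha> q then pdx i (G (\<alpha>(q := \<alpha> q - 1))) x +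
          (\<Sum>e\<in>E. if 1 \<le> (\<alpha>(q := \<alpha> q - 1)) e then G ((\<alpha>(q := \<alpha> q - 1))(e := (\<alpha>(q := \<alpha> q - 1)) e - 1)) x * x (shift i e) else 0)
         else 0)"
      using v vd[of q] by (simp add: Dhat_def dhat_def)
    have R1: "Dhat E ks q G \<alpha> = (\<lambda>x. pd q (G \<alpha>) x + (if q \<in> E \<and> 1 \<le> \<alpha> q then G (\<alpha>(q := \<alpha> q - 1)) x else 0))"
      using v by (simp add: Dhat_def)
    have R2: "pdx i (Dhat E ks q G \<alpha>) x = pdx i (pd q (G \<alpha>)) x +
        (if q \<in> E \<and> 1 \<le> \<alpha> q then pdx i (G (\<alpha>(q := \<alpha> q - 1))) x else 0)"
      unfolding R1 by (simp add: pdx_add[OF smooth_fnD(3)[OF sm] smooth_if0[OF sm]] pdx_if0)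
    have R3: "Dhat E ks q G (\<alpha>(e := \<alpha> e - 1)) x = pd q (G (\<alpha>(e := \<alpha> e - 1))) x +
        (if q \<in> E \<and> 1 \<le> (\<alpha>(e := \<alpha> e - 1)) q then G ((\<alpha>(e := \<alpha> e - 1))(q := (\<alpha>(e := \<alpha> e - 1)) q - 1)) x else 0)" for e
      using vd[of e] by (simp add: Dhat_def)
    have R4: "dhat E ks i (Dhat E ks q G) \<alpha> x = pdx i (pd q (G \<alpha>)) x +
        (if q \<in> E \<and> 1 \<le> \<alpha> q then pdx i (G (\<alpha>(q := \<alpha> q - 1))) x else 0)
        + (\<Sum>e\<in>E. if 1 \<le> \<alpha> e then pd q (G (\<alpha>(e := \<alpha> e - 1))) x * x (shift i e) else 0)
        + (\<Sum>e\<in>E. if 1 \<le> \<alpha> e \<and> q \<in> E \<and> 1 \<le> (\<alpha>(e := \<alpha> e - 1)) q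
             then G ((\<alpha>(e := \<alpha> e - 1))(q := (\<alpha>(e := \<alpha> e - 1)) q - 1)) x * x (shift i e) else 0)"
    proof -
      have "dhat E ks i (Dhat E ks q G) \<alpha> x = pdx i (Dhat E ks q G \<alpha>) x +
         (\<Sum>e\<in>E. if 1 \<le> \<alpha> e then Dhat E ks q G (\<alpha>(e := \<alpha> e - 1)) x * x (shift i e) else 0)"
        using v by (simp add: dhat_def)
      also have "(\<Sum>e\<in>E. if 1 \<le> \<alpha> e then Dhat E ks q G (\<alpha>(e := \<alpha> e - 1)) x * x (shift i e) else 0)
        = (\<Sum>e\<in>E. if 1 \<le> \<alpha> e then pd q (G (\<alpha>(e := \<alpha> e - 1))) x * x (shift i e) else 0)
        + (\<Sum>e\<in>E. if 1 \<le> \<alpha> e \<and> q \<in> E \<and> 1 \<le> (\<alpha>(e := \<alpha> e - 1)) q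
             then G ((\<alpha>(e := \<alpha> e - 1))(q := (\<alpha>(e := \<alpha> e - 1)) q - 1)) x * x (shift i e) else 0)"
        unfolding sum.distrib[symmetric] R3 by (intro sum.cong refl) (auto simp: algebra_simps)
      finally show ?thesis unfolding R2 by simp
    qed
    have R5: "Dhat E ks q' G \<alpha> x = pd q' (G \<alpha>) x + (if q' \<in> E \<and> 1 \<le> \<alpha> q' then G (\<alpha>(q' := \<alpha> q' - 1)) x else 0)"
      using v by (simp add: Dhat_def)
    have I1: "(\<Sum>e\<in>E. if 1 \<le> \<alpha> e \<and> shift i e = q then G (\<alpha>(e := \<alpha> e - 1)) x else 0)
        = (if c then (if q' \<in> E \<and> 1 \<le> \<alpha> q' then G (\<alpha>(q' := \<alpha> q' - 1)) x else 0) else 0)"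
    proof -
      have "(\<Sum>e\<in>E. if 1 \<le> \<alpha> e \<and> shift i e = q then G (\<alpha>(e := \<alpha> e - 1)) x else 0)
         = (\<Sum>e\<in>E. if e = q' then (if c \<and> 1 \<le> \<alpha> q' then G (\<alpha>(q' := \<alpha> q' - 1)) x else 0) else 0)"
        by (intro sum.cong refl) (auto simp: shift_eq c_def q'_def)
      also have "\<dots> = (if q' \<in> E then (if c \<and> 1 \<le> \<alpha> q' then G (\<alpha>(q' := \<alpha> q' - 1)) x else 0) else 0)"
        by (rule sum.delta[OF E])
      finally show ?thesis by simp
    qed
    have I2: "(if q \<in> E \<and> 1 \<le> \<alpha> q then
          (\<Sum>e\<in>E. if 1 \<le> (\<alpha>(q := \<alpha> q - 1)) e then G ((\<alpha>(q := \<alpha> q - 1))(e := (\<alpha>(q := \<alpha> q - 1)) e - 1)) x * x (shift i e) else 0)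
         else 0)
        = (\<Sum>e\<in>E. if 1 \<le> \<alpha> e \<and> q \<in> E \<and> 1 \<le> (\<alpha>(e := \<alpha> e - 1)) q
             then G ((\<alpha>(e := \<alpha> e - 1))(q := (\<alpha>(e := \<alpha> e - 1)) q - 1)) x * x (shift i e) else 0)"
    proof -
      have "(if q \<in> E \<and> 1 \<le> \<alpha> q then
          (\<Sum>e\<in>E. if 1 \<le> (\<alpha>(q := \<alpha> q - 1)) e then G ((\<alpha>(q := \<alpha> q - 1))(e := (\<alpha>(q := \<alpha> q - 1)) e - 1)) x * x (shift i e) else 0)
         else 0) = (\<Sum>e\<in>E. if q \<in> E \<and> 1 \<le> \<alpha> q then
          (if 1 \<le> (\<alpha>(q := \<alpha> q - 1)) e then G ((\<alpha>(q := \<alpha> q - 1))(e := (\<alpha>(q := \<alpha> q - 1)) e - 1)) x * x (shift i e) else 0)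
         else 0)" by (simp add: sum_if0)
      also have "\<dots> = (\<Sum>e\<in>E. if 1 \<le> \<alpha> e \<and> q \<in> E \<and> 1 \<le> (\<alpha>(e := \<alpha> e - 1)) q
             then G ((\<alpha>(e := \<alpha> e - 1))(q := (\<alpha>(e := \<alpha> e - 1)) q - 1)) x * x (shift i e) else 0)"
      proof (intro sum.cong refl)
        fix e assume "e \<in> E"
        show "(if q \<in> E \<and> 1 \<le> \<alpha> q then
          (if 1 \<le> (\<alpha>(q := \<alpha> q - 1)) e then G ((\<alpha>(q := \<alpha> q - 1))(e := (\<alpha>(q := \<alpha> q - 1)) e - 1)) x * x (shift i e) else 0)
          else 0) = (if 1 \<le> \<alpha> e \<and> q \<in> E \<and> 1 \<le> (\<alpha>(e := \<alpha> e - 1)) q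
             then G ((\<alpha>(e := \<alpha> e - 1))(q := (\<alpha>(e := \<alpha> e - 1)) q - 1)) x * x (shift i e) else 0)"
        proof (cases "e = q")
          case True then show ?thesis by auto
        next
          case False then show ?thesis by (auto simp: fun_upd_twist)
        qed
      qed
      finally show ?thesis .
    qed
    show ?thesis
      using alg[OF L3 L2 R4 R5 I1 I2] unfolding c_def q'_def .
  qed
qed

definition Zop :: "('l, 'i) idx set \<Rightarrow> nat \<Rightarrow> 'l \<Rightarrow> ('i \<Rightarrow> nat) \<Rightarrow> ('i \<Rightarrow> nat) \<Rightarrow> ('l, 'i) dfn \<Rightarrow> ('l, 'i) dfn" where
  "Zop E ks t p l G = (if l \<le> p then Dhat E ks (t, p - l) G else (\<lambda>\<alpha> x. 0))"

lemma good_zero: "goodD (\<lambda>\<alpha> x. 0)"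
  unfolding goodD_def using smooth_zero by simp

lemma dhat_zero: "dhat E ks i (\<lambda>\<alpha> x. 0) = (\<lambda>\<alpha> x. 0)"
  using dhat_lin[of "{} :: nat set" "\<lambda>_. (\<lambda>\<alpha> x. 0)" E ks i "\<lambda>_. 0"] by simp

lemma Dhat_zero: "Dhat E ks q (\<lambda>\<alpha> x. 0) = (\<lambda>\<alpha> x. 0)"
  using Dhat_lin[of "{} :: nat set" "\<lambda>_. (\<lambda>\<alpha> x. 0)" E ks q "\<lambda>_. 0"] by simp

lemma Zop_good: "goodD G \<Longrightarrow> goodD (Zop E ks t p l G)"
  unfolding Zop_def using Dhat_good good_zero by auto

lemma Zop_lin:
  assumes J: "finite J" and H: "\<And>j. j \<in> J \<Longrightarrow> goodD (H j)"
  shows "Zop E ks t p l (\<lambda>\<alpha> x. \<Sum>j\<in>J. c j * H j \<alpha> x) = (\<lambda>\<alpha> x. \<Sum>j\<in>J. c j * Zop E ks t p l (H j) \<alpha> x)"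
  unfolding Zop_def using Dhat_lin[OF J H] by auto

lemma Zcomm:
  assumes G: "goodD G" and E: "finite E"
  shows "Zop E ks t p l (dhat E ks i G) = (\<lambda>\<alpha> x. dhat E ks i (Zop E ks t p l G) \<alpha> x + Zop E ks t p (l(i := l i + 1)) G \<alpha> x)"
proof (cases "l \<le> p")
  case True
  have pl: "(p - l) j = p j - l j" for j by (simp add: fun_diff_def)
  have iff: "l(i := l i + 1) \<le> p \<longleftrightarrow> l i + 1 \<le> p i"
  proof
    assume "l(i := l i + 1) \<le> p" then have "(l(i := l i + 1)) i \<le> p i" by (rule le_funD)
    thus "l i + 1 \<le> p i" by simp
  next
    assume a: "l i + 1 \<le> p i"
    show "l(i := l i + 1) \<le> p"
    proof (rule le_funI)
      fix j show "(l(i := l i + 1)) j \<le> p j" using a le_funD[OF True, of j] by (cases "j = i") auto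
    qed
  qed
  have c: "(1 \<le> (p - l) i) = (l(i := l i + 1) \<le> p)"
    unfolding iff pl by linarith
  have q': "(p - l)(i := (p - l) i - 1) = p - l(i := l i + 1)"
  proof (rule ext)
    fix j show "((p - l)(i := (p - l) i - 1)) j = (p - l(i := l i + 1)) j"
      by (cases "j = i") (simp_all add: pl)
  qed
  have h: "Dhat E ks (t, p - l) (dhat E ks i G) = (\<lambda>\<alpha> x. dhat E ks i (Dhat E ks (t, p - l) G) \<alpha> x +
     (if l(i := l i + 1) \<le> p then Dhat E ks (t, p - l(i := l i + 1)) G \<alpha> x else 0))"
    using comm[OF G E, of ks "(t, p - l)" i] unfolding fst_conv snd_conv c q' .
  have z1: "Zop E ks t p l H = Dhat E ks (t, p - l) H" for H using True unfolding Zop_def by simp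
  have z2: "Zop E ks t p (l(i := l i + 1)) G = (if l(i := l i + 1) \<le> p then Dhat E ks (t, p - l(i := l i + 1)) G
      else (\<lambda>\<alpha> x. 0))" unfolding Zop_def ..
  show ?thesis unfolding z1 h z2
    by (cases "l(i := l i + 1) \<le> p") (simp_all only: if_True if_False add_0_right)
next
  case False
  have "\<not> l(i := l i + 1) \<le> p"
  proof
    assume a: "l(i := l i + 1) \<le> p"
    have "l \<le> p"
    proof (rule le_funI)
      fix j have "(l(i := l i + 1)) j \<le> p j" using a by (rule le_funD)
      thus "l j \<le> p j" by (cases "j = i") auto
    qed
    thus False using False by simp
  qed
  then show ?thesis using False unfolding Zop_def by (simp add: dhat_zero)
qed

lemma pow_good: "goodD G \<Longrightarrow> goodD ((dhat E ks i ^^ n) G)"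
  by (induction n) (auto intro: dhat_good)

lemma pow_lin:
  assumes J: "finite J" and H: "\<And>j. j \<in> J \<Longrightarrow> goodD (H j)"
  shows "(dhat E ks i ^^ n) (\<lambda>\<alpha> x. \<Sum>j\<in>J. c j * H j \<alpha> x) = (\<lambda>\<alpha> x. \<Sum>j\<in>J. c j * (dhat E ks i ^^ n) (H j) \<alpha> x)"
proof (induction n)
  case 0 then show ?case by simp
next
  case (Suc n)
  show ?case using dhat_lin[OF J pow_good[OF H]] by (simp add: Suc.IH)
qed

lemma binom1:
  assumes G: "goodD G" and E: "finite E"
  shows "Zop E ks t p l ((dhat E ks i ^^ n) G) = (\<lambda>\<alpha> x. \<Sum>j\<le>n. real (n choose j) *
            (dhat E ks i ^^ (n - j)) (Zop E ks t p (l(i := l i + j)) G) \<alpha> x)"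
proof (induction n arbitrary: l)
  case 0 then show ?case by simp
next
  case (Suc n)
  define A where "A = dhat E ks i"
  define T where "T = (\<lambda>j \<alpha> x. (A ^^ (Suc n - j)) (Zop E ks t p (l(i := l i + j)) G) \<alpha> x)"
  have gZ: "goodD (Zop E ks t p l' G)" for l' using Zop_good[OF G] .
  have gp: "goodD ((A ^^ m) (Zop E ks t p l' G))" for m l' unfolding A_def using pow_good[OF gZ] .
  have "Zop E ks t p l ((A ^^ Suc n) G) = Zop E ks t p l (A ((A ^^ n) G))" by simp
  also have "\<dots> = (\<lambda>\<alpha> x. A (Zop E ks t p l ((A ^^ n) G)) \<alpha> x + Zop E ks t p (l(i := l i + 1)) ((A ^^ n) G) \<alpha> x)"
    unfolding A_def by (rule Zcomm[OF pow_good[OF G] E])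
  also have "A (Zop E ks t p l ((A ^^ n) G)) = (\<lambda>\<alpha> x. \<Sum>j\<le>n. real (n choose j) * T j \<alpha> x)"
    unfolding Suc.IH[unfolded A_def[symmetric]] unfolding A_def
    by (subst dhat_lin) (auto intro!: gp[unfolded A_def] simp: T_def A_def Suc_diff_le)
  also have "Zop E ks t p (l(i := l i + 1)) ((A ^^ n) G) = (\<lambda>\<alpha> x. \<Sum>j\<le>n. real (n choose j) * T (Suc j) \<alpha> x)"
    unfolding Suc.IH[unfolded A_def[symmetric]] by (simp add: T_def)
  finally have eq: "Zop E ks t p l ((A ^^ Suc n) G) = (\<lambda>\<alpha> x. (\<Sum>j\<le>n. real (n choose j) * T j \<alpha> x) +
      (\<Sum>j\<le>n. real (n choose j) * T (Suc j) \<alpha> x))" .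
  have "(\<Sum>j\<le>n. real (n choose j) * T j \<alpha> x) = (\<Sum>j\<le>Suc n. real (n choose j) * T j \<alpha> x)" for \<alpha> x
    by simp
  also have "\<dots> \<alpha> x = T 0 \<alpha> x + (\<Sum>j\<le>n. real (n choose Suc j) * T (Suc j) \<alpha> x)" for \<alpha> x
    by (subst sum.atMost_Suc_shift) simp
  finally have e1: "(\<Sum>j\<le>n. real (n choose j) * T j \<alpha> x) = T 0 \<alpha> x + (\<Sum>j\<le>n. real (n choose Suc j) * T (Suc j) \<alpha> x)" for \<alpha> x .
  have e2: "(\<Sum>j\<le>Suc n. real (Suc n choose j) * T j \<alpha> x) = T 0 \<alpha> x +
      (\<Sum>j\<le>n. real (n choose Suc j) * T (Suc j) \<alpha> x) + (\<Sum>j\<le>n. real (n choose j) * T (Suc j) \<alpha> x)" for \<alpha> x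
    by (subst sum.atMost_Suc_shift) (simp add: sum.distrib algebra_simps)
  have tgt: "(\<lambda>\<alpha> x. \<Sum>j\<le>Suc n. real (Suc n choose j) * (A ^^ (Suc n - j)) (Zop E ks t p (l(i := l i + j)) G) \<alpha> x)
     = (\<lambda>\<alpha> x. \<Sum>j\<le>Suc n. real (Suc n choose j) * T j \<alpha> x)"
    by (simp only: T_def)
  show ?case unfolding A_def[symmetric] eq tgt
    by (rule ext, rule ext) (simp only: e1 e2)
qed

definition Fo :: "('l, 'i) idx set \<Rightarrow> nat \<Rightarrow> 'i list \<Rightarrow> ('i \<Rightarrow> nat) \<Rightarrow> ('l, 'i) dfn \<Rightarrow> ('l, 'i) dfn" where
  "Fo E ks is k G = fold (\<lambda>i G. (dhat E ks i ^^ k i) G) is G"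

lemma Fo_Nil[simp]: "Fo E ks [] k G = G"
  unfolding Fo_def by simp

lemma Fo_Cons: "Fo E ks (i # is) k G = Fo E ks is k ((dhat E ks i ^^ k i) G)"
  unfolding Fo_def by simp

lemma Fo_good: "goodD G \<Longrightarrow> goodD (Fo E ks is k G)"
  by (induction "is" arbitrary: G) (auto simp: Fo_Cons intro: pow_good)

lemma Fo_lin:
  assumes J: "finite J" and H: "\<And>j. j \<in> J \<Longrightarrow> goodD (H j)"
  shows "Fo E ks is k (\<lambda>\<alpha> x. \<Sum>j\<in>J. c j * H j \<alpha> x) = (\<lambda>\<alpha> x. \<Sum>j\<in>J. c j * Fo E ks is k (H j) \<alpha> x)"
  using H
proof (induction "is" arbitrary: H)
  case Nil then show ?case by simp
next
  case (Cons i "is")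
  have h: "(dhat E ks i ^^ k i) (\<lambda>\<alpha> x. \<Sum>j\<in>J. c j * H j \<alpha> x) =
      (\<lambda>\<alpha> x. \<Sum>j\<in>J. c j * (dhat E ks i ^^ k i) (H j) \<alpha> x)"
    by (rule pow_lin[OF J]) (rule Cons.prems)
  show ?case unfolding Fo_Cons h
    by (rule Cons.IH) (rule pow_good, rule Cons.prems)
qed

lemma Fo_cong: "(\<And>i. i \<in> set is \<Longrightarrow> k i = k' i) \<Longrightarrow> Fo E ks is k G = Fo E ks is k' G"
  by (induction "is" arbitrary: G) (auto simp: Fo_Cons)

lemma Fo_zero: "Fo E ks is k (\<lambda>\<alpha> x. 0) = (\<lambda>\<alpha> x. 0)"
  using Fo_lin[of "{} :: nat set" "\<lambda>_. (\<lambda>\<alpha> x. 0)" E ks "is" k "\<lambda>_. 0"] by simp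

lemma multi:
  assumes E: "finite E"
  shows "distinct is \<Longrightarrow> goodD G \<Longrightarrow> Zop E ks t p l (Fo E ks is k G) = (\<lambda>\<alpha> x.
     \<Sum>m\<in>{m. m \<le> k \<and> (\<forall>i. i \<notin> set is \<longrightarrow> m i = 0)}.
        real (\<Prod>i\<in>set is. k i choose m i) * Fo E ks is (k - m) (Zop E ks t p (\<lambda>j. l j + m j) G) \<alpha> x)"
proof (induction "is" arbitrary: G l)
  case Nil
  have M: "{m. m \<le> k \<and> (\<forall>i. i \<notin> set [] \<longrightarrow> m i = (0::nat))} = {(\<lambda>_. 0)}"
    by (auto simp: fun_eq_iff le_fun_def)
  show ?case unfolding M by simp
next
  case (Cons i "is")
  have i: "i \<notin> set is" and d: "distinct is" using Cons.prems(1) by auto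
  have G: "goodD G" by (rule Cons.prems(2))
  define A where "A = dhat E ks i"
  define Mis where "Mis = {m. m \<le> k \<and> (\<forall>i. i \<notin> set is \<longrightarrow> m i = (0::nat))}"
  define M' where "M' = {m. m \<le> k \<and> (\<forall>i'. i' \<notin> set (i # is) \<longrightarrow> m i' = (0::nat))}"
  define F where "F = (\<lambda>m' \<alpha> x. Fo E ks (i # is) (k - m') (Zop E ks t p (\<lambda>j. l j + m' j) G) \<alpha> x)"
  define c' where "c' = (\<lambda>m'. real (\<Prod>i'\<in>set (i # is). k i' choose m' i'))"
  have gA: "goodD ((A ^^ n) G)" for n unfolding A_def by (rule pow_good[OF G])
  have step1: "Zop E ks t p l (Fo E ks (i # is) k G) = (\<lambda>\<alpha> x. \<Sum>m\<in>Mis.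
        real (\<Prod>i\<in>set is. k i choose m i) * Fo E ks is (k - m) (Zop E ks t p (\<lambda>j. l j + m j) ((A ^^ k i) G)) \<alpha> x)"
    unfolding Fo_Cons Mis_def A_def by (rule Cons.IH[OF d pow_good[OF G]])
  have step2: "Fo E ks is (k - m) (Zop E ks t p (\<lambda>j. l j + m j) ((A ^^ k i) G)) \<alpha> x =
      (\<Sum>j\<le>k i. real (k i choose j) * F (m(i := j)) \<alpha> x)" if m: "m \<in> Mis" for m \<alpha> x
  proof -
    have mi: "m i = 0" using m i unfolding Mis_def by blast
    have gZ: "goodD ((A ^^ n) (Zop E ks t p l' G))" for n l'
      unfolding A_def by (rule pow_good, rule Zop_good[OF G])
    have "Fo E ks is (k - m) (Zop E ks t p (\<lambda>j. l j + m j) ((A ^^ k i) G)) =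
      Fo E ks is (k - m) (\<lambda>\<alpha> x. \<Sum>j\<le>k i. real (k i choose j) *
            (A ^^ (k i - j)) (Zop E ks t p ((\<lambda>j. l j + m j)(i := (\<lambda>j. l j + m j) i + j)) G) \<alpha> x)"
      unfolding A_def by (subst binom1[OF G E]) (rule refl)
    also have "\<dots> = (\<lambda>\<alpha> x. \<Sum>j\<le>k i. real (k i choose j) *
        Fo E ks is (k - m) ((A ^^ (k i - j)) (Zop E ks t p ((\<lambda>j. l j + m j)(i := (\<lambda>j. l j + m j) i + j)) G)) \<alpha> x)"
      by (rule Fo_lin) (simp_all add: gZ)
    also have "\<dots> = (\<lambda>\<alpha> x. \<Sum>j\<le>k i. real (k i choose j) * F (m(i := j)) \<alpha> x)"
    proof (intro ext sum.cong refl arg_cong2[where f="(*)"])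
      fix \<alpha> x j
      have e1: "(\<lambda>j. l j + m j)(i := (\<lambda>j. l j + m j) i + j) = (\<lambda>j'. l j' + (m(i := j)) j')"
        using mi by (auto simp: fun_eq_iff)
      have e2: "Fo E ks is (k - m) H = Fo E ks is (k - m(i := j)) H" for H
        by (rule Fo_cong) (use i in \<open>auto simp: fun_diff_def\<close>)
      have e3: "(k - m(i := j)) i = k i - j" by (simp add: fun_diff_def)
      show "Fo E ks is (k - m) ((A ^^ (k i - j)) (Zop E ks t p ((\<lambda>j. l j + m j)(i := (\<lambda>j. l j + m j) i + j)) G)) \<alpha> x
          = F (m(i := j)) \<alpha> x"
        unfolding F_def Fo_Cons e1 e2 e3 A_def ..
    qed
    finally show ?thesis by simp
  qed
  have coef: "real (\<Prod>i\<in>set is. k i choose m i) * real (k i choose j) = c' (m(i := j))" if "m \<in> Mis" for m j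
  proof -
    have "(\<Prod>i'\<in>set (i # is). k i' choose (m(i := j)) i') = (k i choose j) * (\<Prod>i'\<in>set is. k i' choose (m(i := j)) i')"
      using i by simp
    also have "(\<Prod>i'\<in>set is. k i' choose (m(i := j)) i') = (\<Prod>i'\<in>set is. k i' choose m i')"
      using i by (intro prod.cong refl) auto
    finally show ?thesis unfolding c'_def by (simp add: mult.commute)
  qed
  have bij: "bij_betw (\<lambda>(m, j). m(i := j)) (Mis \<times> {..k i}) M'"
    unfolding bij_betw_def
  proof
    show "inj_on (\<lambda>(m, j). m(i := j)) (Mis \<times> {..k i})"
    proof (rule inj_onI, clarify)
      fix m1 j1 m2 j2 assume a: "m1 \<in> Mis" "m2 \<in> Mis" "m1(i := j1) = m2(i := j2)"
      have "j1 = j2" using fun_cong[OF a(3), of i] by simp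
      moreover have "m1 = m2"
      proof (rule ext)
        fix i' show "m1 i' = m2 i'"
        proof (cases "i' = i")
          case True thus ?thesis using a(1,2) i unfolding Mis_def by auto
        next
          case False thus ?thesis using fun_cong[OF a(3), of i'] by simp
        qed
      qed
      ultimately show "m1 = m2 \<and> j1 = j2" by simp
    qed
    show "(\<lambda>(m, j). m(i := j)) ` (Mis \<times> {..k i}) = M'"
    proof
      show "(\<lambda>(m, j). m(i := j)) ` (Mis \<times> {..k i}) \<subseteq> M'"
      proof
        fix y assume "y \<in> (\<lambda>(m, j). m(i := j)) ` (Mis \<times> {..k i})"
        then obtain m j where a: "m \<in> Mis" "j \<le> k i" and y: "y = m(i := j)" by auto
        have "m(i := j) \<le> k"
        proof (rule le_funI)
          fix i' show "(m(i := j)) i' \<le> k i'"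
            using a le_funD[of m k i'] unfolding Mis_def by (cases "i' = i") auto
        qed
        moreover have "\<forall>i'. i' \<notin> set (i # is) \<longrightarrow> (m(i := j)) i' = 0" using a unfolding Mis_def by auto
        ultimately show "y \<in> M'" unfolding M'_def y by blast
      qed
      show "M' \<subseteq> (\<lambda>(m, j). m(i := j)) ` (Mis \<times> {..k i})"
      proof
        fix m' assume a: "m' \<in> M'"
        have "m'(i := 0) \<le> k"
        proof (rule le_funI)
          fix i' show "(m'(i := 0)) i' \<le> k i'"
            using a le_funD[of m' k i'] unfolding M'_def by (cases "i' = i") auto
        qed
        moreover have "\<forall>i'. i' \<notin> set is \<longrightarrow> (m'(i := 0)) i' = 0" using a unfolding M'_def by auto
        ultimately have "m'(i := 0) \<in> Mis" unfolding Mis_def by blast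
        moreover have "m' i \<in> {..k i}" using a le_funD[of m' k i] unfolding M'_def by auto
        moreover have "m' = (\<lambda>(m, j). m(i := j)) (m'(i := 0), m' i)" by simp
        ultimately show "m' \<in> (\<lambda>(m, j). m(i := j)) ` (Mis \<times> {..k i})" by blast
      qed
    qed
  qed
  show ?case
  proof (intro ext)
    fix \<alpha> x
    have "Zop E ks t p l (Fo E ks (i # is) k G) \<alpha> x = (\<Sum>m\<in>Mis.
        real (\<Prod>i\<in>set is. k i choose m i) * (\<Sum>j\<le>k i. real (k i choose j) * F (m(i := j)) \<alpha> x))"
      unfolding step1 using step2 by simp
    also have "\<dots> = (\<Sum>m\<in>Mis. \<Sum>j\<in>{..k i}. c' (m(i := j)) * F (m(i := j)) \<alpha> x)"
      by (intro sum.cong refl) (simp add: sum_distrib_left coef[symmetric] mult.assoc)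
    also have "\<dots> = (\<Sum>(m, j)\<in>Mis \<times> {..k i}. c' (m(i := j)) * F (m(i := j)) \<alpha> x)"
      by (rule sum.cartesian_product)
    also have "\<dots> = (\<Sum>y\<in>Mis \<times> {..k i}. (\<lambda>m'. c' m' * F m' \<alpha> x) ((\<lambda>(m, j). m(i := j)) y))"
      by (intro sum.cong refl) auto
    also have "\<dots> = (\<Sum>m'\<in>M'. c' m' * F m' \<alpha> x)"
      by (rule sum.reindex_bij_betw[OF bij])
    finally show "Zop E ks t p l (Fo E ks (i # is) k G) \<alpha> x = (\<Sum>m\<in>{m. m \<le> k \<and> (\<forall>i'. i' \<notin> set (i # is) \<longrightarrow> m i' = 0)}.
        real (\<Prod>i\<in>set (i # is). k i choose m i) * Fo E ks (i # is) (k - m) (Zop E ks t p (\<lambda>j. l j + m j) G) \<alpha> x)"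
      unfolding M'_def c'_def F_def .
  qed
qed

theorem lemma3p17:
  fixes Eplus :: "'l::finite \<Rightarrow> ('l, 'i::{finite,linorder}) idx set"
    and kstar :: nat and k p :: "'i \<Rightarrow> nat" and t lab :: 'l
    and Fh :: "('l, 'i) dfn"
  assumes "CARD('i) \<ge> 2"
    and "\<forall>l. finite (Eplus l)"
    and "Fh \<in> DP (Eplus lab) kstar"
  shows "(\<lambda>\<alpha> x. \<Sum>l\<in>{l. l \<le> k}.
            real (\<Prod>i\<in>UNIV. k i choose l i) *
            (if l \<le> p then dpow (Eplus lab) kstar (k - l)
                               (Dhat (Eplus lab) kstar (t, p - l) Fh) \<alpha> x
             else 0))
         = Dhat (Eplus lab) kstar (t, p) (dpow (Eplus lab) kstar k Fh)"
proof -
  define E where "E = Eplus lab"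
  define "is" where "is = sorted_list_of_set (UNIV :: 'i set)"
  have E: "finite E" using assms(2) unfolding E_def by blast
  have G: "goodD Fh"
    unfolding goodD_def
  proof
    fix \<alpha> show "smooth_fn (Fh \<alpha>)"
      using assms(3) smooth_zero unfolding DP_def by (cases "validD (Eplus lab) kstar \<alpha>") auto
  qed
  have d: "distinct is" and s: "set is = UNIV" unfolding is_def by simp_all
  have dp: "dpow E kstar k' H = Fo E kstar is k' H" for k' H
    unfolding dpow_def Fo_def is_def ..
  have z0: "(\<lambda>_. 0) \<le> p" by (simp add: le_fun_def)
  have p0: "p - (\<lambda>_. 0) = p" by (simp add: fun_diff_def)
  have Z0: "Dhat E kstar (t, p) H = Zop E kstar t p (\<lambda>_. 0) H" for H
    unfolding Zop_def using z0 p0 by simp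
  have M: "{m. m \<le> k \<and> (\<forall>i. i \<notin> set is \<longrightarrow> m i = 0)} = {l. l \<le> k}" using s by simp
  have "Dhat E kstar (t, p) (dpow E kstar k Fh) = (\<lambda>\<alpha> x. \<Sum>m\<in>{l. l \<le> k}.
        real (\<Prod>i\<in>UNIV. k i choose m i) * Fo E kstar is (k - m) (Zop E kstar t p m Fh) \<alpha> x)"
    unfolding Z0 dp multi[OF E d G] M s by simp
  also have "\<dots> = (\<lambda>\<alpha> x. \<Sum>l\<in>{l. l \<le> k}.
            real (\<Prod>i\<in>UNIV. k i choose l i) *
            (if l \<le> p then dpow E kstar (k - l) (Dhat E kstar (t, p - l) Fh) \<alpha> x else 0))"
    by (intro ext sum.cong refl arg_cong2[where f="(*)"]) (simp add: Zop_def dp Fo_zero)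
  finally show ?thesis unfolding E_def by simp
qed

end
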